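(* Let $\mathcal{T}\mathcal{E}$ be the tangent equation of $u_{tx}=2u_yu_{xx}+4u_xu_{xy}-u_{xxxy}$, i.e. the system consisting of this equation together with $q_{tx}=2u_yq_{xx}+2u_{xx}q_y+4u_xq_{xy}+4u_{xy}q_x-q_{xxxy}$, where $q$ and its derivatives are odd (anticommuting) variables. Then the system $$w_x=2u_xq_x,\qquad w_y=q_t+q_{xxy}-2u_xq_y-2u_yq_x,$$ with $w$ odd, is compatible on $\mathcal{T}\mathcal{E}$ and thus defines a covering $\tau\colon W\to\mathcal{T}\mathcal{E}$; moreover, for every $\mu\in\mathbb{R}$, setting $\gamma=1-\mu t$, the function $$S^u=(2\gamma u_x-\mu y)q-\gamma q_{xx}+\gamma w$$ is a symmetry shadow in the composition $\mathbf{t}\circ\tau\colon W\to\mathcal{E}$, i.e. it satisfies $D_xD_tS^u-2u_{xx}D_yS^u-2u_yD_x^2S^u-4u_{xy}D_xS^u-4u_xD_xD_yS^u+D_x^3D_yS^u=0$ with total derivatives lifted to $W$.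
   Context: $\mathbf{t}\colon\mathcal{T}\mathcal{E}\to\mathcal{E}$ is the tangent covering $(u_\sigma,q_\sigma)\mapsto u_\sigma$. A covering over an equation is given by additional (nonlocal) variables with derivatives prescribed by a system whose compatibility conditions hold by virtue of the equation; total derivatives are extended accordingly (e.g. $D_x(w)=2u_xq_x$). A shadow in a covering is a solution of the lifted linearized equation. *)

theory Defs
  imports Complex_Main "HOL-Library.Poly_Mapping"
begin

text \<open>A jet index (a,b,c) means
a derivatives in t, b in x, c in y.\<close>

type_synonym jidx = "nat \<times> nat \<times> nat"

datatype var = T | X | Y | U jidx | Q jidx | W jidx

type_synonym dpoly = "(var \<Rightarrow>\<^sub>0 nat) \<Rightarrow>\<^sub>0 real"

definition V :: "var \<Rightarrow> dpoly" where
  "V v = Poly_Mapping.single (Poly_Mapping.single v 1) 1"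

definition C :: "real \<Rightarrow> dpoly" where
  "C c = Poly_Mapping.single 0 c"

abbreviation u :: "nat \<Rightarrow> nat \<Rightarrow> nat \<Rightarrow> dpoly" where "u a b c \<equiv> V (U (a,b,c))"
abbreviation q :: "nat \<Rightarrow> nat \<Rightarrow> nat \<Rightarrow> dpoly" where "q a b c \<equiv> V (Q (a,b,c))"
abbreviation w :: "nat \<Rightarrow> nat \<Rightarrow> nat \<Rightarrow> dpoly" where "w a b c \<equiv> V (W (a,b,c))"

datatype dir = Dt | Dx | Dy

fun shift :: "dir \<Rightarrow> jidx \<Rightarrow> jidx" where
  "shift Dt (a,b,c) = (Suc a, b, c)"
| "shift Dx (a,b,c) = (a, Suc b, c)"
| "shift Dy (a,b,c) = (a, b, Suc c)"

fun dvar :: "dir \<Rightarrow> var \<Rightarrow> dpoly" where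
  "dvar d T = (if d = Dt then 1 else 0)"
| "dvar d X = (if d = Dx then 1 else 0)"
| "dvar d Y = (if d = Dy then 1 else 0)"
| "dvar d (U s) = V (U (shift d s))"
| "dvar d (Q s) = V (Q (shift d s))"
| "dvar d (W s) = V (W (shift d s))"

text \<open>Total derivative D_d on the free jet space: the derivation extending dvar
(chain rule applied monomial by monomial).\<close>
definition D :: "dir \<Rightarrow> dpoly \<Rightarrow> dpoly" where
  "D d p = (\<Sum>mon\<in>Poly_Mapping.keys p. \<Sum>x\<in>Poly_Mapping.keys (mon :: var \<Rightarrow>\<^sub>0 nat).
      Poly_Mapping.single (mon - Poly_Mapping.single x 1)
         (Poly_Mapping.lookup p mon * real (Poly_Mapping.lookup mon x)) * dvar d x)"

definition Dmulti :: "jidx \<Rightarrow> dpoly \<Rightarrow> dpoly" where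
  "Dmulti s p = (case s of (a,b,c) \<Rightarrow>
      (D Dt ^^ a) ((D Dx ^^ b) ((D Dy ^^ c) p)))"

inductive_set gen_ideal :: "dpoly set \<Rightarrow> dpoly set" for G where
  zero: "0 \<in> gen_ideal G"
| step: "p \<in> gen_ideal G \<Longrightarrow> g \<in> G \<Longrightarrow> p + c * g \<in> gen_ideal G"

text \<open>Differential ideal generated by G: the ideal generated by all total
derivatives of the elements of G.  "f = 0 by virtue of the system G" means
f belongs to this ideal.\<close>
definition diff_ideal :: "dpoly set \<Rightarrow> dpoly set" where
  "diff_ideal G = gen_ideal {Dmulti s g | s g. g \<in> G}"

definition eqE :: dpoly where
  "eqE = u 1 1 0 - (2 * u 0 0 1 * u 0 2 0 + 4 * u 0 1 0 * u 0 1 1 - u 0 3 1)"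

definition eqTE :: dpoly where
  "eqTE = q 1 1 0 - (2 * u 0 0 1 * q 0 2 0 + 2 * u 0 2 0 * q 0 0 1
            + 4 * u 0 1 0 * q 0 1 1 + 4 * u 0 1 1 * q 0 1 0 - q 0 3 1)"

text \<open>Right-hand sides of the covering system w_x = A, w_y = B.\<close>
definition covA :: dpoly where
  "covA = 2 * u 0 1 0 * q 0 1 0"

definition covB :: dpoly where
  "covB = q 1 0 0 + q 0 2 1 - 2 * u 0 1 0 * q 0 0 1 - 2 * u 0 0 1 * q 0 1 0"

definition linE :: "dpoly \<Rightarrow> dpoly" where
  "linE S = D Dx (D Dt S) - 2 * u 0 2 0 * D Dy S - 2 * u 0 0 1 * D Dx (D Dx S)
           - 4 * u 0 1 1 * D Dx S - 4 * u 0 1 0 * D Dx (D Dy S)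
           + D Dx (D Dx (D Dx (D Dy S)))"

definition gam :: "real \<Rightarrow> dpoly" where
  "gam \<mu> = 1 - C \<mu> * V T"

definition Su :: "real \<Rightarrow> dpoly" where
  "Su \<mu> = (2 * gam \<mu> * u 0 1 0 - C \<mu> * V Y) * q 0 0 0 - gam \<mu> * q 0 2 0
           + gam \<mu> * w 0 0 0"

end

theory Submission
  imports Defs
begin

definition Dm :: "dir \<Rightarrow> (var \<Rightarrow>\<^sub>0 nat) \<Rightarrow> dpoly" where
  "Dm d m = (\<Sum>x\<in>Poly_Mapping.keys m.
      Poly_Mapping.single (m - Poly_Mapping.single x 1) (real (Poly_Mapping.lookup m x)) * dvar d x)"

lemma D_Dm: "D d p = (\<Sum>mon\<in>Poly_Mapping.keys p.
    Poly_Mapping.single 0 (Poly_Mapping.lookup p mon) * Dm d mon)"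
  unfolding D_def Dm_def
  by (simp add: sum_distrib_left mult_single mult.assoc[symmetric])

lemma D_sup:
  assumes "finite S" "Poly_Mapping.keys p \<subseteq> S"
  shows "D d p = (\<Sum>mon\<in>S. Poly_Mapping.single 0 (Poly_Mapping.lookup p mon) * Dm d mon)"
  unfolding D_Dm
  by (rule sum.mono_neutral_left) (use assms in \<open>auto simp: in_keys_iff\<close>)

lemma D_add: "D d (p + qq) = D d p + D d qq"
proof -
  let ?S = "Poly_Mapping.keys p \<union> Poly_Mapping.keys qq"
  have f: "finite ?S" by simp
  have "D d (p + qq) = (\<Sum>mon\<in>?S. Poly_Mapping.single 0 (Poly_Mapping.lookup (p+qq) mon) * Dm d mon)"
    by (rule D_sup[OF f keys_add])
  also have "\<dots> = (\<Sum>mon\<in>?S. Poly_Mapping.single 0 (Poly_Mapping.lookup p mon) * Dm d mon)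
     + (\<Sum>mon\<in>?S. Poly_Mapping.single 0 (Poly_Mapping.lookup qq mon) * Dm d mon)"
    by (simp add: lookup_add single_add distrib_right sum.distrib)
  also have "\<dots> = D d p + D d qq"
    by (simp add: D_sup[OF f, symmetric])
  finally show ?thesis .
qed

lemma D_zero[simp]: "D d 0 = 0"
  by (simp add: D_def)

lemma D_uminus: "D d (- p) = - D d p"
proof -
  have "D d p + D d (- p) = 0" using D_add[of d p "-p"] by simp
  then show ?thesis by (metis neg_eq_iff_add_eq_0)
qed

lemma D_diff: "D d (p - qq) = D d p - D d qq"
  using D_add[of d p "-qq"] D_uminus[of d qq] by simp

lemma D_single: "D d (Poly_Mapping.single m c) = Poly_Mapping.single 0 c * Dm d m"
  by (subst D_sup[of "{m}"]) auto

lemma Dm_sup: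
  assumes "finite S" "Poly_Mapping.keys m \<subseteq> S"
  shows "Dm d m = (\<Sum>x\<in>S. Poly_Mapping.single (m - Poly_Mapping.single x 1)
      (real (Poly_Mapping.lookup m x)) * dvar d x)"
  unfolding Dm_def
  by (rule sum.mono_neutral_left) (use assms in \<open>auto simp: in_keys_iff\<close>)

lemma lookup_minus_nat: "Poly_Mapping.lookup (f - g) k = Poly_Mapping.lookup f k - Poly_Mapping.lookup (g :: 'a \<Rightarrow>\<^sub>0 nat) k"
  by (simp add: minus_poly_mapping.rep_eq)

lemma mon_shift:
  "Poly_Mapping.single (m + n - Poly_Mapping.single x 1) (real (Poly_Mapping.lookup m x))
   = Poly_Mapping.single n 1 * Poly_Mapping.single (m - Poly_Mapping.single x 1) (real (Poly_Mapping.lookup m x))"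
proof (cases "Poly_Mapping.lookup m x = 0")
  case True then show ?thesis by simp
next
  case False
  have "m + n - Poly_Mapping.single x 1 = n + (m - Poly_Mapping.single x 1)"
    by (rule poly_mapping_eqI) (use False in \<open>auto simp: lookup_minus_nat lookup_add lookup_single when_def\<close>)
  then show ?thesis by (simp add: mult_single)
qed

lemma Dm_add: "Dm d (m + n) = Poly_Mapping.single m 1 * Dm d n + Poly_Mapping.single n 1 * Dm d m"
proof -
  let ?S = "Poly_Mapping.keys m \<union> Poly_Mapping.keys n"
  have f: "finite ?S" by simp
  have "Dm d (m + n) = (\<Sum>x\<in>?S. Poly_Mapping.single (m + n - Poly_Mapping.single x 1)
      (real (Poly_Mapping.lookup (m + n) x)) * dvar d x)"
    by (rule Dm_sup[OF f keys_add])
  also have "\<dots> = (\<Sum>x\<in>?S. Poly_Mapping.single (m + n - Poly_Mapping.single x 1)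
      (real (Poly_Mapping.lookup m x)) * dvar d x) + (\<Sum>x\<in>?S. Poly_Mapping.single (m + n - Poly_Mapping.single x 1)
      (real (Poly_Mapping.lookup n x)) * dvar d x)"
    by (simp add: lookup_add single_add distrib_right sum.distrib)
  also have "(\<Sum>x\<in>?S. Poly_Mapping.single (m + n - Poly_Mapping.single x 1)
      (real (Poly_Mapping.lookup m x)) * dvar d x) = Poly_Mapping.single n 1 * Dm d m"
    unfolding Dm_sup[OF f Un_upper1] sum_distrib_left
    by (rule sum.cong[OF refl]) (simp only: mon_shift mult.assoc)
  also have "(\<Sum>x\<in>?S. Poly_Mapping.single (m + n - Poly_Mapping.single x 1)
      (real (Poly_Mapping.lookup n x)) * dvar d x) = Poly_Mapping.single m 1 * Dm d n"
    unfolding Dm_sup[OF f Un_upper2] sum_distrib_left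
    by (rule sum.cong[OF refl]) (simp only: add.commute[of m n] mon_shift mult.assoc)
  finally show ?thesis by simp
qed

lemma D_mult_ss: "D d (Poly_Mapping.single m a * Poly_Mapping.single n b)
   = Poly_Mapping.single m a * D d (Poly_Mapping.single n b) + Poly_Mapping.single n b * D d (Poly_Mapping.single m a)"
proof -
  have sm: "Poly_Mapping.single m a = Poly_Mapping.single 0 a * Poly_Mapping.single m 1" for m and a :: real
    by (simp add: mult_single)
  have "D d (Poly_Mapping.single m a * Poly_Mapping.single n b) = Poly_Mapping.single 0 a * Poly_Mapping.single 0 b
     * (Poly_Mapping.single m 1 * Dm d n + Poly_Mapping.single n 1 * Dm d m)"
    by (simp add: mult_single D_single Dm_add)
  also have "\<dots> = Poly_Mapping.single m a * D d (Poly_Mapping.single n b) + Poly_Mapping.single n b * D d (Poly_Mapping.single m a)"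
    unfolding D_single by (simp only: sm[of m a] sm[of n b]) (simp add: algebra_simps)
  finally show ?thesis .
qed

lemma upd_eq: "a \<notin> Poly_Mapping.keys f \<Longrightarrow> Poly_Mapping.update a b f = f + Poly_Mapping.single a b"
  by (rule poly_mapping_eqI) (auto simp: lookup_update lookup_add lookup_single in_keys_iff when_def)

lemma D_mult_s: "D d (Poly_Mapping.single m a * qq) = Poly_Mapping.single m a * D d qq + qq * D d (Poly_Mapping.single m a)"
proof (induction qq rule: update_induct)
  case const then show ?case by simp
next
  case (update f x b)
  then show ?case by (simp add: upd_eq distrib_left distrib_right D_add D_mult_ss algebra_simps)
qed

lemma D_mult: "D d (p * qq) = p * D d qq + qq * D d p"
proof (induction p rule: update_induct)
  case const then show ?case by simp
next
  case (update f x b)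
  have "D d ((f + Poly_Mapping.single x b) * qq) = (f * D d qq + qq * D d f)
     + (Poly_Mapping.single x b * D d qq + qq * D d (Poly_Mapping.single x b))"
    by (simp only: distrib_right D_add D_mult_s update.IH)
  then show ?case by (simp add: upd_eq[OF update(1)] D_add algebra_simps)
qed

lemma D_V: "D d (V v) = dvar d v"
  unfolding V_def D_single Dm_def by simp

lemma D_C: "D d (C c) = 0"
  unfolding C_def D_single Dm_def by simp

lemma D_one: "D d 1 = 0"
  using D_C[of d 1] by (simp add: C_def)

lemma D_numeral: "D d (numeral k) = 0"
  using D_C[of d "numeral k"] by (simp add: C_def)

lemmas Dsimps = numeral_2_eq_2 numeral_3_eq_3 D_add D_diff D_uminus D_mult D_V D_C D_one D_numeral

lemma gi_add': "qq \<in> gen_ideal G \<Longrightarrow> p \<in> gen_ideal G \<Longrightarrow> p + qq \<in> gen_ideal G"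
proof (induction qq rule: gen_ideal.induct)
  case zero then show ?case by simp
next
  case (step qq g c)
  then show ?case using gen_ideal.step[of "p + qq" G g c] by (simp add: add.assoc)
qed

lemma gi_add: "p \<in> gen_ideal G \<Longrightarrow> qq \<in> gen_ideal G \<Longrightarrow> p + qq \<in> gen_ideal G"
  using gi_add' by blast

lemma gi_gen: "g \<in> G \<Longrightarrow> c * g \<in> gen_ideal G"
  using gen_ideal.step[OF gen_ideal.zero] by simp

lemma di_gen: "g \<in> G \<Longrightarrow> c * Dmulti s g \<in> diff_ideal G"
  unfolding diff_ideal_def by (rule gi_gen) blast

lemma di_add: "p \<in> diff_ideal G \<Longrightarrow> qq \<in> diff_ideal G \<Longrightarrow> p + qq \<in> diff_ideal G"
  unfolding diff_ideal_def by (rule gi_add)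

theorem proposition4:
  shows "D Dy covA - D Dx covB \<in> diff_ideal {eqE, eqTE} \<and>
         (\<forall>\<mu>::real. linE (Su \<mu>) \<in>
            diff_ideal {eqE, eqTE, w 0 1 0 - covA, w 0 0 1 - covB})"
proof
  have "D Dy covA - D Dx covB = (-1) * Dmulti (0,0,0) eqTE"
    unfolding covA_def covB_def eqTE_def Dmulti_def
    by (simp add: Dsimps algebra_simps)
  then show "D Dy covA - D Dx covB \<in> diff_ideal {eqE, eqTE}"
    by (metis di_gen insertCI)
next
  show "\<forall>\<mu>::real. linE (Su \<mu>) \<in> diff_ideal {eqE, eqTE, w 0 1 0 - covA, w 0 0 1 - covB}"
  proof
    fix \<mu> :: real
    let ?g = "gam \<mu>"
    let ?A = "w 0 1 0 - covA"
    let ?B = "w 0 0 1 - covB"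
    let ?G = "{eqE, eqTE, ?A, ?B}"
    have eq: "linE (Su \<mu>) =
        (4 * ?g * u 0 1 0 - C \<mu> * V Y) * Dmulti (0,0,0) eqTE
      + (4 * ?g * q 0 1 0) * Dmulti (0,0,0) eqE
      + (2 * ?g * q 0 0 0) * Dmulti (0,Suc 0,0) eqE
      + (- ?g) * Dmulti (0,Suc (Suc 0),0) eqTE
      + ?g * Dmulti (Suc 0,0,0) ?A
      + (- C \<mu> - 4 * ?g * u 0 1 1) * Dmulti (0,0,0) ?A
      + (- 2 * ?g * u 0 2 0) * Dmulti (0,0,0) ?B
      + (- 2 * ?g * u 0 0 1) * Dmulti (0,Suc 0,0) ?A
      + (- 4 * ?g * u 0 1 0) * Dmulti (0,0,Suc 0) ?A
      + ?g * Dmulti (0,Suc (Suc 0),Suc 0) ?A"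
      unfolding linE_def Su_def gam_def covA_def covB_def eqTE_def eqE_def Dmulti_def
      by (simp add: Dsimps algebra_simps)
    show "linE (Su \<mu>) \<in> diff_ideal ?G"
      unfolding eq
      by (intro di_add di_gen; simp)
  qed
qed

end
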